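(* Let $H$ be a cubic graph of order $m$ and let $G=T(H)$. Then $c_2(G)-\left\lceil\frac{|V(G)|+2}{4}\right\rceil\ge\left\lfloor\frac{m-2}{4}\right\rfloor$. Moreover, $G$ has the same number of bridges and the same chromatic index as $H$.
   Context: For a cubic graph $H$, the triangle-replaced graph $T(H)$ is obtained by replacing each vertex $v$ of $H$ by a triangle $T(v)$ and, for each edge $uv$ of $H$, adding an edge joining a vertex of $T(u)$ to a vertex of $T(v)$, so that each triangle vertex is incident with exactly one added edge. For a graph $G=(V,E)$ and $S_0\subseteq V$, the irreversible $2$-threshold conversion process sets, for $t=1,2,\dots$, $S_t=S_{t-1}\cup\{v: v \text{ has at least } 2 \text{ neighbours in } S_{t-1}\}$; $S_0$ is a $2$-conversion set if $S_t=V$ for some $t$, and $c_2(G)$ is the minimum size of a $2$-conversion set. *)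

theory Defs
  imports Complex_Main
begin

definition simple_graph :: "'v set \<Rightarrow> 'v set set \<Rightarrow> bool" where
  "simple_graph V E \<longleftrightarrow> finite V \<and> (\<forall>e\<in>E. \<exists>u v. e = {u, v} \<and> u \<noteq> v \<and> u \<in> V \<and> v \<in> V)"

definition degree :: "'v set set \<Rightarrow> 'v \<Rightarrow> nat" where
  "degree E v = card {e \<in> E. v \<in> e}"

definition cubic_graph :: "'v set \<Rightarrow> 'v set set \<Rightarrow> bool" where
  "cubic_graph V E \<longleftrightarrow> simple_graph V E \<and> (\<forall>v\<in>V. degree E v = 3)"

text \<open>Triangle-replaced graph T(H): vertex v of H becomes the triangle on the
  vertices (v,e) for the three edges e of H incident with v; each edge e = {u,v}
  of H yields the edge joining (u,e) and (v,e).\<close>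

definition tr_verts :: "'v set \<Rightarrow> 'v set set \<Rightarrow> ('v \<times> 'v set) set" where
  "tr_verts V E = {(v, e). v \<in> V \<and> e \<in> E \<and> v \<in> e}"

definition tr_edges :: "'v set \<Rightarrow> 'v set set \<Rightarrow> ('v \<times> 'v set) set set" where
  "tr_edges V E =
     {{(v, e), (v, f)} | v e f. v \<in> V \<and> e \<in> E \<and> f \<in> E \<and> v \<in> e \<and> v \<in> f \<and> e \<noteq> f}
   \<union> {{(u, e), (v, e)} | u v e. e \<in> E \<and> e = {u, v} \<and> u \<noteq> v}"

definition conv_step :: "'v set \<Rightarrow> 'v set set \<Rightarrow> 'v set \<Rightarrow> 'v set" where
  "conv_step V E S = S \<union> {v \<in> V. card {u \<in> S. {u, v} \<in> E} \<ge> 2}"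

definition is_2conv_set :: "'v set \<Rightarrow> 'v set set \<Rightarrow> 'v set \<Rightarrow> bool" where
  "is_2conv_set V E S \<longleftrightarrow> S \<subseteq> V \<and> (\<exists>t. (conv_step V E ^^ t) S = V)"

definition c2 :: "'v set \<Rightarrow> 'v set set \<Rightarrow> nat" where
  "c2 V E = (LEAST k. \<exists>S. is_2conv_set V E S \<and> card S = k)"

definition reach :: "'v set \<Rightarrow> 'v set set \<Rightarrow> ('v \<times> 'v) set" where
  "reach V E = {(u, v). u \<in> V \<and> v \<in> V \<and> (u, v) \<in> {(x, y). {x, y} \<in> E}\<^sup>*}"

definition num_components :: "'v set \<Rightarrow> 'v set set \<Rightarrow> nat" where
  "num_components V E = card (V // reach V E)"

definition bridges :: "'v set \<Rightarrow> 'v set set \<Rightarrow> 'v set set" where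
  "bridges V E = {e \<in> E. num_components V (E - {e}) > num_components V E}"

definition proper_edge_colouring :: "'v set set \<Rightarrow> nat \<Rightarrow> ('v set \<Rightarrow> nat) \<Rightarrow> bool" where
  "proper_edge_colouring E k c \<longleftrightarrow>
     (\<forall>e\<in>E. c e < k) \<and> (\<forall>e\<in>E. \<forall>f\<in>E. e \<noteq> f \<and> e \<inter> f \<noteq> {} \<longrightarrow> c e \<noteq> c f)"

definition chromatic_index :: "'v set set \<Rightarrow> nat" where
  "chromatic_index E = (LEAST k. \<exists>c. proper_edge_colouring E k c)"

end

theory Submission
  imports Defs
begin

definition miss :: "'a set set \<Rightarrow> ('a set \<Rightarrow> nat) \<Rightarrow> 'a \<Rightarrow> nat \<Rightarrow> bool" where
  "miss F c x d \<longleftrightarrow> (\<forall>e\<in>F. x \<in> e \<longrightarrow> c e \<noteq> d)"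

definition edges2 :: "'a set set \<Rightarrow> bool" where
  "edges2 F \<longleftrightarrow> (\<forall>e\<in>F. \<exists>a b. e = {a,b} \<and> a \<noteq> b)"

lemma add_edge:
  assumes "proper_edge_colouring F k c" "a < k" "miss F c x a" "miss F c y a"
  shows "proper_edge_colouring (insert {x,y} F) k (c({x,y}:=a))"
  using assms unfolding proper_edge_colouring_def miss_def by auto

lemma remove_edge:
  assumes "proper_edge_colouring F k c"
  shows "proper_edge_colouring (F - {e}) k c"
  using assms unfolding proper_edge_colouring_def by auto

lemma miss_remove:
  assumes "proper_edge_colouring F k c" "e \<in> F" "x \<in> e"
  shows "miss (F - {e}) c x (c e)"
  using assms unfolding proper_edge_colouring_def miss_def by blast

lemma miss_mono: "F' \<subseteq> F \<Longrightarrow> miss F c x d \<Longrightarrow> miss F' c x d"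
  unfolding miss_def by auto

lemma unique_col:
  assumes "proper_edge_colouring F k c" "e \<in> F" "f \<in> F" "x \<in> e" "x \<in> f" "c e = c f"
  shows "e = f"
  using assms unfolding proper_edge_colouring_def by blast

lemma exists_miss:
  assumes "finite F" "degree F x < k"
  shows "\<exists>d<k. miss F c x d"
proof (rule ccontr)
  assume "\<not> ?thesis"
  hence "{0..<k} \<subseteq> c ` {e\<in>F. x \<in> e}" unfolding miss_def by auto
  hence "card {0..<k} \<le> card (c ` {e\<in>F. x \<in> e})"
    by (intro card_mono) (use assms in auto)
  also have "\<dots> \<le> degree F x" unfolding degree_def by (rule card_image_le) (use assms in auto)
  finally show False using assms by simp
qed

lemma not_miss_edge:
  assumes "edges2 F" "\<not> miss F c x d"
  shows "\<exists>y. {x,y} \<in> F \<and> c {x,y} = d \<and> x \<noteq> y"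
proof -
  from assms obtain e where e: "e \<in> F" "x \<in> e" "c e = d" unfolding miss_def by auto
  then obtain a b where ab: "e = {a,b}" "a \<noteq> b" using assms(1) unfolding edges2_def by blast
  show ?thesis
  proof (cases "x = a")
    case True thus ?thesis using e ab by (intro exI[of _ b]) auto
  next
    case False thus ?thesis using e ab by (intro exI[of _ a]) (auto simp: insert_commute)
  qed
qed

lemma shift1:
  assumes pc: "proper_edge_colouring F k c" and uw: "{u,w} \<in> F" "u \<noteq> w" "c {u,w} = \<beta>"
    and mv: "miss F c v \<beta>" and mu: "miss F c u \<gamma>" and mw: "miss F c w \<gamma>" and g: "\<gamma> < k"
    and uv: "u \<noteq> v" "v \<noteq> w"
  shows "\<exists>c'. proper_edge_colouring (insert {u,v} F) k c'"
proof -
  define F1 where "F1 = F - {{u,w}}"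
  have bk: "\<beta> < k" using pc uw unfolding proper_edge_colouring_def by auto
  have bg: "\<beta> \<noteq> \<gamma>" using mu uw unfolding miss_def by auto
  have p1: "proper_edge_colouring F1 k c" unfolding F1_def by (rule remove_edge[OF pc])
  have m1u: "miss F1 c u \<beta>" unfolding F1_def using miss_remove[OF pc uw(1)] uw by auto
  have m1v: "miss F1 c v \<beta>" using miss_mono[OF _ mv] unfolding F1_def by auto
  define c2 where "c2 = c({u,v}:=\<beta>)"
  have p2: "proper_edge_colouring (insert {u,v} F1) k c2"
    unfolding c2_def by (rule add_edge[OF p1 bk m1u m1v])
  have m2u: "miss (insert {u,v} F1) c2 u \<gamma>"
    using mu bg unfolding miss_def c2_def F1_def by auto
  have m2w: "miss (insert {u,v} F1) c2 w \<gamma>"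
    using mw uv uw unfolding miss_def c2_def F1_def by auto
  have p3: "proper_edge_colouring (insert {u,w} (insert {u,v} F1)) k (c2({u,w}:=\<gamma>))"
    by (rule add_edge[OF p2 g m2u m2w])
  have "insert {u,w} (insert {u,v} F1) = insert {u,v} F" unfolding F1_def using uw by auto
  thus ?thesis using p3 by auto
qed

lemma shift2:
  assumes pc: "proper_edge_colouring F k c" and uw: "{u,w} \<in> F" "u \<noteq> w" "c {u,w} = \<beta>"
    and mv: "miss F c v \<beta>" and uz: "{u,z} \<in> F" "u \<noteq> z" "c {u,z} = \<gamma>"
    and mw: "miss F c w \<gamma>" and mz: "miss F c z \<epsilon>" and mu: "miss F c u \<epsilon>" and ek: "\<epsilon> < k"
    and d: "u \<noteq> v" "v \<noteq> w" "v \<noteq> z" "w \<noteq> z"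
  shows "\<exists>c'. proper_edge_colouring (insert {u,v} F) k c'"
proof -
  define F1 where "F1 = F - {{u,w}}"
  have bk: "\<beta> < k" using pc uw unfolding proper_edge_colouring_def by auto
  have be: "\<beta> \<noteq> \<epsilon>" using mu uw unfolding miss_def by auto
  have p1: "proper_edge_colouring F1 k c" unfolding F1_def by (rule remove_edge[OF pc])
  have m1u: "miss F1 c u \<beta>" unfolding F1_def using miss_remove[OF pc uw(1)] uw by auto
  have m1v: "miss F1 c v \<beta>" using miss_mono[OF _ mv] unfolding F1_def by auto
  define c2 where "c2 = c({u,v}:=\<beta>)"
  define F2 where "F2 = insert {u,v} F1"
  have p2: "proper_edge_colouring F2 k c2"
    unfolding c2_def F2_def by (rule add_edge[OF p1 bk m1u m1v])
  have neq1: "{u,z} \<noteq> {u,w}" using d by (auto simp: doubleton_eq_iff)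
  have neq2: "{u,z} \<noteq> {u,v}" using d by (auto simp: doubleton_eq_iff)
  have uz2: "{u,z} \<in> F2" using uz neq1 unfolding F2_def F1_def by auto
  have cz2: "c2 {u,z} = \<gamma>" using uz neq2 unfolding c2_def by auto
  have m2w: "miss F2 c2 w \<gamma>" using mw d uw unfolding miss_def c2_def F2_def F1_def by auto
  have m2u: "miss F2 c2 u \<epsilon>" using mu be unfolding miss_def c2_def F2_def F1_def by auto
  have m2z: "miss F2 c2 z \<epsilon>" using mz d uz unfolding miss_def c2_def F2_def F1_def by auto
  obtain c' where "proper_edge_colouring (insert {u,w} F2) k c'"
    using shift1[OF p2 uz2 uz(2) cz2 m2w m2u m2z ek uw(2)] d by auto
  moreover have "insert {u,w} F2 = insert {u,v} F" unfolding F2_def F1_def using uw by auto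
  ultimately show ?thesis by auto
qed

definition abE :: "'a set set \<Rightarrow> ('a set \<Rightarrow> nat) \<Rightarrow> nat \<Rightarrow> nat \<Rightarrow> 'a set set" where
  "abE F c a b = {e\<in>F. c e = a \<or> c e = b}"

definition kR :: "'a set set \<Rightarrow> ('a set \<Rightarrow> nat) \<Rightarrow> nat \<Rightarrow> nat \<Rightarrow> ('a set \<times> 'a set) set" where
  "kR F c a b = {(e,f). e \<in> abE F c a b \<and> f \<in> abE F c a b \<and> e \<inter> f \<noteq> {}}"

definition kcomp :: "'a set set \<Rightarrow> ('a set \<Rightarrow> nat) \<Rightarrow> nat \<Rightarrow> nat \<Rightarrow> 'a set \<Rightarrow> 'a set set" where
  "kcomp F c a b e0 = {f. (e0,f) \<in> (kR F c a b)\<^sup>*}"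

definition swapc :: "nat \<Rightarrow> nat \<Rightarrow> ('a set \<Rightarrow> nat) \<Rightarrow> 'a set set \<Rightarrow> 'a set \<Rightarrow> nat" where
  "swapc a b c K = (\<lambda>e. if e \<in> K then (if c e = a then b else a) else c e)"

definition touches :: "'a set set \<Rightarrow> 'a \<Rightarrow> bool" where
  "touches K x \<longleftrightarrow> (\<exists>e\<in>K. x \<in> e)"

lemma kcomp_self: "e0 \<in> kcomp F c a b e0"
  unfolding kcomp_def by auto

lemma kcomp_sub:
  assumes "e0 \<in> abE F c a b"
  shows "kcomp F c a b e0 \<subseteq> abE F c a b"
proof
  fix f assume "f \<in> kcomp F c a b e0"
  hence "(e0,f) \<in> (kR F c a b)\<^sup>*" unfolding kcomp_def by auto
  thus "f \<in> abE F c a b"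
    by (induction rule: rtrancl_induct) (use assms in \<open>auto simp: kR_def\<close>)
qed

lemma kcomp_closed:
  assumes "e0 \<in> abE F c a b" "f \<in> kcomp F c a b e0" "g \<in> abE F c a b" "f \<inter> g \<noteq> {}"
  shows "g \<in> kcomp F c a b e0"
proof -
  have "f \<in> abE F c a b" using kcomp_sub[OF assms(1)] assms(2) by auto
  hence "(f,g) \<in> kR F c a b" using assms unfolding kR_def by auto
  thus ?thesis using assms(2) unfolding kcomp_def by auto
qed

lemma kempe_proper:
  assumes pc: "proper_edge_colouring F k c" and ab: "a < k" "b < k"
    and sub: "K \<subseteq> abE F c a b"
    and cl: "\<And>f g. f \<in> K \<Longrightarrow> g \<in> abE F c a b \<Longrightarrow> f \<inter> g \<noteq> {} \<Longrightarrow> g \<in> K"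
  shows "proper_edge_colouring F k (swapc a b c K)"
  unfolding proper_edge_colouring_def
proof (intro conjI ballI impI)
  fix e assume "e \<in> F" thus "swapc a b c K e < k"
    using pc ab unfolding proper_edge_colouring_def swapc_def by auto
next
  fix e f assume ef: "e \<in> F" "f \<in> F" "e \<noteq> f \<and> e \<inter> f \<noteq> {}"
  have ne: "c e \<noteq> c f" using pc ef unfolding proper_edge_colouring_def by auto
  show "swapc a b c K e \<noteq> swapc a b c K f"
  proof (cases "e \<in> K")
    case True
    show ?thesis
    proof (cases "f \<in> K")
      case True
      thus ?thesis using \<open>e \<in> K\<close> ne sub unfolding swapc_def abE_def by auto
    next
      case False
      hence "f \<notin> abE F c a b" using cl[OF True] ef by auto
      thus ?thesis using True False ef unfolding swapc_def abE_def by auto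
    qed
  next
    case False
    show ?thesis
    proof (cases "f \<in> K")
      case True
      have "f \<inter> e \<noteq> {}" using ef by auto
      hence "e \<notin> abE F c a b" using cl[OF True, of e] False by auto
      thus ?thesis using True False ef unfolding swapc_def abE_def by auto
    next
      case False
      thus ?thesis using \<open>e \<notin> K\<close> ne unfolding swapc_def by auto
    qed
  qed
qed

lemma swap_miss_out:
  assumes "\<not> touches K x"
  shows "miss F (swapc a b c K) x d = miss F c x d"
  using assms unfolding touches_def miss_def swapc_def by auto

lemma swap_miss_in:
  assumes sub: "K \<subseteq> abE F c a b"
    and cl: "\<And>f g. f \<in> K \<Longrightarrow> g \<in> abE F c a b \<Longrightarrow> f \<inter> g \<noteq> {} \<Longrightarrow> g \<in> K"
    and t: "touches K x" and ab: "a \<noteq> b"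
  shows "miss F (swapc a b c K) x d = miss F c x (if d = a then b else if d = b then a else d)"
proof -
  obtain e0 where e0: "e0 \<in> K" "x \<in> e0" using t unfolding touches_def by auto
  have key: "\<And>f. f \<in> F \<Longrightarrow> x \<in> f \<Longrightarrow> swapc a b c K f =
      (if c f = a then b else if c f = b then a else c f)"
  proof -
    fix f assume f: "f \<in> F" "x \<in> f"
    show "swapc a b c K f = (if c f = a then b else if c f = b then a else c f)"
    proof (cases "c f = a \<or> c f = b")
      case True
      hence "f \<in> K" using cl[OF e0(1), of f] f e0 unfolding abE_def by auto
      thus ?thesis using True ab unfolding swapc_def by auto
    next
      case False
      hence "f \<notin> K" using sub unfolding abE_def by auto
      thus ?thesis using False unfolding swapc_def by auto
    qed
  qed
  show ?thesis unfolding miss_def using key ab by auto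
qed

lemma kR_sym: "sym (kR F c a b)"
  unfolding kR_def sym_def by auto

lemma touch_same:
  assumes "e1 \<in> abE F c a b" "e2 \<in> abE F c a b"
    "f1 \<in> kcomp F c a b e1" "f2 \<in> kcomp F c a b e2" "x \<in> f1" "x \<in> f2"
  shows "kcomp F c a b e1 = kcomp F c a b e2"
proof -
  let ?R = "kR F c a b"
  have "f1 \<in> abE F c a b" "f2 \<in> abE F c a b" using kcomp_sub assms by blast+
  hence "(f1,f2) \<in> ?R" using assms unfolding kR_def by auto
  have s: "sym (?R\<^sup>*)" by (rule sym_rtrancl[OF kR_sym])
  have "(e1,f1) \<in> ?R\<^sup>*" "(e2,f2) \<in> ?R\<^sup>*" using assms unfolding kcomp_def by auto
  hence "(f2,e2) \<in> ?R\<^sup>*" using s by (meson symD)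
  hence "(e1,e2) \<in> ?R\<^sup>*" using \<open>(e1,f1) \<in> ?R\<^sup>*\<close> \<open>(f1,f2) \<in> ?R\<close>
    by (meson rtrancl_into_rtrancl rtrancl_trans)
  moreover hence "(e2,e1) \<in> ?R\<^sup>*" using s by (meson symD)
  ultimately show ?thesis unfolding kcomp_def by (auto intro: rtrancl_trans)
qed

lemma reach_cross:
  assumes "(e0,f) \<in> R\<^sup>*" "e0 \<in> A" "f \<notin> A"
  shows "\<exists>g h. g \<in> A \<and> h \<notin> A \<and> (g,h) \<in> R \<and> (e0,h) \<in> R\<^sup>*"
  using assms
proof (induction rule: rtrancl_induct)
  case base thus ?case by auto
next
  case (step y z)
  show ?case
  proof (cases "y \<in> A")
    case True thus ?thesis using step
      by (intro exI[of _ y] exI[of _ z]) (auto intro: rtrancl_into_rtrancl)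
  next
    case False thus ?thesis using step by auto
  qed
qed

lemma grow:
  assumes fin: "finite K" and K: "K = {f. (e0,f) \<in> R\<^sup>*}"
    and R: "\<And>g h. (g,h) \<in> R \<Longrightarrow> g \<inter> h \<noteq> {} \<and> card h = 2"
    and e0: "card e0 = 2"
  shows "card (\<Union>K) \<le> card K + 1"
proof -
  have fe: "\<And>f. f \<in> K \<Longrightarrow> finite f"
  proof -
    fix f assume "f \<in> K"
    hence "(e0,f) \<in> R\<^sup>*" using K by auto
    thus "finite f" by (induction rule: rtrancl_induct) (use e0 R in \<open>auto intro: card_ge_0_finite\<close>)
  qed
  have e0K: "e0 \<in> K" using K by auto
  have main: "n \<le> card K \<longrightarrow>
        (\<exists>A. A \<subseteq> K \<and> e0 \<in> A \<and> card A = n \<and> card (\<Union>A) \<le> n + 1)" if "n \<ge> 1" for n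
    using that
  proof (induction n rule: dec_induct)
    case base
    show ?case
      by (intro impI exI[of _ "{e0}"]) (use e0K e0 in auto)
  next
    case (step n)
    show ?case
    proof (intro impI)
      assume le: "Suc n \<le> card K"
      then obtain A where A: "A \<subseteq> K" "e0 \<in> A" "card A = n" "card (\<Union>A) \<le> n + 1"
        using step(3) by auto
      have finA: "finite A" using A(1) fin finite_subset by auto
      have "A \<noteq> K" using A(3) le by auto
      then obtain f where f: "f \<in> K" "f \<notin> A" using A(1) by auto
      then obtain g h where gh: "g \<in> A" "h \<notin> A" "(g,h) \<in> R" "(e0,h) \<in> R\<^sup>*"
        using reach_cross[of e0 f R A] K A(2) by auto
      have hK: "h \<in> K" using gh K by auto
      have gh2: "g \<inter> h \<noteq> {}" "card h = 2" using R[OF gh(3)] by auto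
      have finU: "finite (\<Union>A)" using finA A(1) fe by auto
      have "card (h - \<Union>A) < card h"
        using gh2 gh(1) fe[OF hK] by (intro psubset_card_mono) auto
      hence c1: "card (h - \<Union>A) \<le> 1" using gh2 by auto
      have "\<Union>(insert h A) = \<Union>A \<union> (h - \<Union>A)" by auto
      hence "card (\<Union>(insert h A)) \<le> card (\<Union>A) + card (h - \<Union>A)"
        by (metis card_Un_le)
      hence "card (\<Union>(insert h A)) \<le> Suc n + 1" using A(4) c1 by auto
      moreover have "card (insert h A) = Suc n" using finA gh(2) A(3) by auto
      ultimately show "\<exists>A. A \<subseteq> K \<and> e0 \<in> A \<and> card A = Suc n \<and> card (\<Union>A) \<le> Suc n + 1"
        using A hK by (intro exI[of _ "insert h A"]) auto
    qed
  qed
  have "card K \<ge> 1" using e0K fin by (metis One_nat_def Suc_leI card_gt_0_iff empty_iff)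
  from main[OF this]
  obtain A where "A \<subseteq> K" "card A = card K" "card (\<Union>A) \<le> card K + 1" by auto
  moreover hence "A = K" using fin by (metis card_subset_eq)
  ultimately show ?thesis by auto
qed

lemma handshake:
  assumes "finite K" "\<And>e. e \<in> K \<Longrightarrow> finite e"
  shows "(\<Sum>x\<in>\<Union>K. card {e\<in>K. x \<in> e}) = (\<Sum>e\<in>K. card e)"
proof -
  have fU: "finite (\<Union>K)" using assms by auto
  have "(\<Sum>x\<in>\<Union>K. card {e\<in>K. x \<in> e}) = (\<Sum>x\<in>\<Union>K. \<Sum>e\<in>K. if x \<in> e then 1 else 0)"
  proof (intro sum.cong refl)
    fix x
    have "card {e\<in>K. x \<in> e} = (\<Sum>e\<in>{e\<in>K. x \<in> e}. 1)" by simp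
    also have "\<dots> = (\<Sum>e\<in>K. if x \<in> e then 1 else 0)" using assms(1) by (rule sum.inter_filter)
    finally show "card {e\<in>K. x \<in> e} = (\<Sum>e\<in>K. if x \<in> e then 1 else 0)" .
  qed
  also have "\<dots> = (\<Sum>e\<in>K. \<Sum>x\<in>\<Union>K. if x \<in> e then 1 else 0)" by (rule sum.swap)
  also have "\<dots> = (\<Sum>e\<in>K. card e)"
  proof (intro sum.cong refl)
    fix e assume "e \<in> K"
    hence "\<Union>K \<inter> e = e" by auto
    have "(\<Sum>x\<in>\<Union>K. if x \<in> e then 1 else 0) = (\<Sum>x\<in>{x\<in>\<Union>K. x \<in> e}. 1)"
      using fU by (rule sum.inter_filter[symmetric])
    also have "{x\<in>\<Union>K. x \<in> e} = e" using \<open>e \<in> K\<close> by auto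
    finally show "(\<Sum>x\<in>\<Union>K. if x \<in> e then 1 else 0) = card e" by (metis card_eq_sum)
  qed
  finally show ?thesis .
qed

lemma edges2_card: "edges2 F \<Longrightarrow> e \<in> F \<Longrightarrow> card e = 2"
  unfolding edges2_def by auto

lemma deg_K_le:
  assumes pc: "proper_edge_colouring F k c" and sub: "K \<subseteq> abE F c a b" and fin: "finite K"
  shows "card {e\<in>K. x \<in> e} \<le> 2"
    and "miss F c x a \<or> miss F c x b \<Longrightarrow> card {e\<in>K. x \<in> e} \<le> 1"
proof -
  let ?S = "{e\<in>K. x \<in> e}"
  have inj: "inj_on c ?S"
  proof (rule inj_onI)
    fix e f assume "e \<in> ?S" "f \<in> ?S" "c e = c f"
    thus "e = f" using unique_col[OF pc, of e f x] sub unfolding abE_def by auto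
  qed
  hence eq: "card ?S = card (c ` ?S)" by (simp add: card_image)
  have "c ` ?S \<subseteq> {a,b}" using sub unfolding abE_def by auto
  hence "card (c ` ?S) \<le> card {a,b}" by (intro card_mono) auto
  also have "\<dots> \<le> 2" by (simp add: card_insert_le_m1)
  finally show "card ?S \<le> 2" using eq by simp
  assume m: "miss F c x a \<or> miss F c x b"
  have "\<exists>z. c ` ?S \<subseteq> {z}"
  proof (cases "miss F c x a")
    case True
    hence "c ` ?S \<subseteq> {b}" using sub unfolding abE_def miss_def by auto
    thus ?thesis by blast
  next
    case False
    hence "c ` ?S \<subseteq> {a}" using m sub unfolding abE_def miss_def by auto
    thus ?thesis by blast
  qed
  then obtain z where "c ` ?S \<subseteq> {z}" by blast
  hence "card (c ` ?S) \<le> card {z}" by (intro card_mono) auto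
  hence "card (c ` ?S) \<le> 1" by simp
  thus "card ?S \<le> 1" using eq by simp
qed

lemma three_end:
  assumes fin: "finite F" and e2: "edges2 F" and pc: "proper_edge_colouring F k c"
    and e0: "e0 \<in> abE F c a b"
    and d: "x1 \<noteq> x2" "x1 \<noteq> x3" "x2 \<noteq> x3"
    and t: "touches (kcomp F c a b e0) x1" "touches (kcomp F c a b e0) x2" "touches (kcomp F c a b e0) x3"
    and m: "miss F c x1 a \<or> miss F c x1 b" "miss F c x2 a \<or> miss F c x2 b" "miss F c x3 a \<or> miss F c x3 b"
  shows False
proof -
  define K where "K = kcomp F c a b e0"
  have sub: "K \<subseteq> abE F c a b" unfolding K_def by (rule kcomp_sub[OF e0])
  have KF: "K \<subseteq> F" using sub unfolding abE_def by auto
  have finK: "finite K" using KF fin finite_subset by auto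
  have cardE: "\<And>e. e \<in> K \<Longrightarrow> card e = 2" using KF edges2_card[OF e2] by auto
  have finE: "\<And>e. e \<in> K \<Longrightarrow> finite e" using cardE by (metis card_ge_0_finite zero_less_numeral)
  have e0F: "e0 \<in> F" using e0 unfolding abE_def by auto
  have g: "card (\<Union>K) \<le> card K + 1"
  proof (rule grow[OF finK])
    show "K = {f. (e0, f) \<in> (kR F c a b)\<^sup>*}" unfolding K_def kcomp_def ..
    show "card e0 = 2" using edges2_card[OF e2 e0F] .
    fix g h assume "(g,h) \<in> kR F c a b"
    thus "g \<inter> h \<noteq> {} \<and> card h = 2" using edges2_card[OF e2] unfolding kR_def abE_def by auto
  qed
  have hs: "(\<Sum>x\<in>\<Union>K. card {e\<in>K. x \<in> e}) = 2 * card K"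
    using handshake[OF finK finE] cardE by simp
  define T where "T = {x1,x2,x3}"
  have TU: "T \<subseteq> \<Union>K" using t unfolding T_def touches_def K_def by auto
  have finU: "finite (\<Union>K)" using finK finE by auto
  have "(\<Sum>x\<in>\<Union>K. card {e\<in>K. x \<in> e}) \<le> (\<Sum>x\<in>\<Union>K. if x \<in> T then 1 else (2::nat))"
  proof (rule sum_mono)
    fix x assume "x \<in> \<Union>K"
    show "card {e\<in>K. x \<in> e} \<le> (if x \<in> T then 1 else (2::nat))"
      using deg_K_le[OF pc sub finK, of x] m unfolding T_def by auto
  qed
  also have "(\<Sum>x\<in>\<Union>K. if x \<in> T then 1 else (2::nat)) = (\<Sum>x\<in>\<Union>K - T. if x \<in> T then 1 else (2::nat)) + (\<Sum>x\<in>T. if x \<in> T then 1 else (2::nat))"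
    by (rule sum.subset_diff[OF TU finU])
  also have "\<dots> = 2 * card (\<Union>K - T) + 3" using d unfolding T_def by simp
  also have "card (\<Union>K - T) = card (\<Union>K) - 3" using TU finU d unfolding T_def by (simp add: card_Diff_subset)
  finally have "2 * card K \<le> 2 * (card (\<Union>K) - 3) + 3" using hs by simp
  moreover have "card (\<Union>K) \<ge> 3"
  proof -
    have "card T = 3" using d unfolding T_def by simp
    thus ?thesis using card_mono[OF finU TU] by simp
  qed
  ultimately show False using g by linarith
qed

lemma viz_step:
  assumes fin: "finite F" and e2: "edges2 F" and deg3: "\<And>x. degree F x \<le> 3"
    and du: "degree F u \<le> 2" and nuv: "{u,v} \<notin> F" and uv: "u \<noteq> v"
    and pc: "proper_edge_colouring F 4 c"
  shows "\<exists>c'. proper_edge_colouring (insert {u,v} F) 4 c'"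
proof -
  have em: "\<And>x c. \<exists>d<4. miss F c x d" 
  proof -
    fix x :: 'a and c :: "'a set \<Rightarrow> nat"
    have "degree F x < 4" using deg3[of x] by linarith
    thus "\<exists>d<4. miss F c x d" using exists_miss[OF fin] by blast
  qed
  obtain \<alpha> where \<alpha>: "\<alpha> < 4" "miss F c u \<alpha>" using em by blast
  show ?thesis
  proof (cases "miss F c v \<alpha>")
    case True thus ?thesis using add_edge[OF pc \<alpha>(1) \<alpha>(2) True] by blast
  next
    case nva: False
    obtain \<beta> where \<beta>: "\<beta> < 4" "miss F c v \<beta>" using em by blast
    show ?thesis
    proof (cases "miss F c u \<beta>")
      case True thus ?thesis using add_edge[OF pc \<beta>(1) True \<beta>(2)] by blast
    next
      case nub: False
      have ab: "\<alpha> \<noteq> \<beta>" using nva \<beta> by auto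
      obtain v' where ev: "{v,v'} \<in> F" "c {v,v'} = \<alpha>" "v \<noteq> v'" using not_miss_edge[OF e2 nva] by blast
      define ev0 where "ev0 = {v,v'}"
      have ev0: "ev0 \<in> abE F c \<alpha> \<beta>" using ev unfolding ev0_def abE_def by auto
      define K where "K = kcomp F c \<alpha> \<beta> ev0"
      have Ksub: "K \<subseteq> abE F c \<alpha> \<beta>" unfolding K_def by (rule kcomp_sub[OF ev0])
      have Kcl: "\<And>f g. f \<in> K \<Longrightarrow> g \<in> abE F c \<alpha> \<beta> \<Longrightarrow> f \<inter> g \<noteq> {} \<Longrightarrow> g \<in> K"
        unfolding K_def using kcomp_closed[OF ev0] by blast
      have tv: "touches K v" unfolding touches_def K_def using kcomp_self[of ev0] ev0_def by auto
      show ?thesis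
      proof (cases "touches K u")
        case False
        define c' where "c' = swapc \<alpha> \<beta> c K"
        have pc': "proper_edge_colouring F 4 c'" unfolding c'_def
          by (rule kempe_proper[OF pc \<alpha>(1) \<beta>(1) Ksub Kcl])
        have "miss F c' u \<alpha>" unfolding c'_def using swap_miss_out[OF False] \<alpha> by auto
        moreover have "miss F c' v \<alpha>" unfolding c'_def using swap_miss_in[OF Ksub Kcl tv ab] \<beta> by auto
        ultimately show ?thesis using add_edge[OF pc' \<alpha>(1)] by blast
      next
        case tu: True
        obtain w where uw: "{u,w} \<in> F" "c {u,w} = \<beta>" "u \<noteq> w" using not_miss_edge[OF e2 nub] by blast
        have vw: "v \<noteq> w" using uw nuv by auto
        obtain \<gamma> where \<gamma>: "\<gamma> < 4" "miss F c w \<gamma>" using em by blast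
        show ?thesis
        proof (cases "miss F c u \<gamma>")
          case True
          show ?thesis by (rule shift1[OF pc uw(1) uw(3) uw(2) \<beta>(2) True \<gamma>(2) \<gamma>(1) uv vw])
        next
          case nug: False
          obtain z where uz: "{u,z} \<in> F" "c {u,z} = \<gamma>" "u \<noteq> z" using not_miss_edge[OF e2 nug] by blast
          have bg: "\<beta> \<noteq> \<gamma>" using \<gamma>(2) uw unfolding miss_def by auto
          have zw: "z \<noteq> w" using uz uw bg by auto
          have zv: "z \<noteq> v" using uz nuv by auto
          show ?thesis
          proof (cases "\<exists>\<epsilon><4. miss F c z \<epsilon> \<and> miss F c u \<epsilon>")
            case True
            then obtain \<epsilon> where "\<epsilon> < 4" "miss F c z \<epsilon>" "miss F c u \<epsilon>" by blast
            thus ?thesis using shift2[OF pc uw(1) uw(3) uw(2) \<beta>(2) uz(1) uz(3) uz(2) \<gamma>(2)] uv vw zv zw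
              by auto
          next
            case nocommon: False
            have ue: "{e\<in>F. u \<in> e} = {{u,w},{u,z}}"
            proof -
              have s: "{{u,w},{u,z}} \<subseteq> {e\<in>F. u \<in> e}" using uw uz by auto
              have "card {{u,w},{u,z}} = 2" using zw by (auto simp: doubleton_eq_iff)
              moreover have "finite {e\<in>F. u \<in> e}" using fin by auto
              ultimately show ?thesis using s du unfolding degree_def
                by (metis card_seteq)
            qed
            obtain \<epsilon> where \<epsilon>: "\<epsilon> < 4" "miss F c z \<epsilon>" using em by blast
            have "\<not> miss F c u \<epsilon>" using nocommon \<epsilon> by auto
            then obtain f where f: "f \<in> F" "u \<in> f" "c f = \<epsilon>" unfolding miss_def by auto
            have "f \<in> {e\<in>F. u \<in> e}" using f by simp
            hence "f = {u,w} \<or> f = {u,z}" unfolding ue by simp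
            hence "\<epsilon> = \<beta> \<or> \<epsilon> = \<gamma>" using f(3) uw(2) uz(2) by metis
            moreover have "\<epsilon> \<noteq> \<gamma>" using \<epsilon>(2) uz unfolding miss_def by auto
            ultimately have mzb: "miss F c z \<beta>" using \<epsilon> by auto
            have nza: "\<not> miss F c z \<alpha>" using nocommon \<alpha> by auto
            obtain z' where ez: "{z,z'} \<in> F" "c {z,z'} = \<alpha>" "z \<noteq> z'" using not_miss_edge[OF e2 nza] by blast
            define ez0 where "ez0 = {z,z'}"
            have ez0: "ez0 \<in> abE F c \<alpha> \<beta>" using ez unfolding ez0_def abE_def by auto
            have ntz: "\<not> touches K z"
            proof
              assume "touches K z"
              have m1: "miss F c u \<alpha> \<or> miss F c u \<beta>" using \<alpha> by simp
              have m2: "miss F c v \<alpha> \<or> miss F c v \<beta>" using \<beta> by simp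
              have m3: "miss F c z \<alpha> \<or> miss F c z \<beta>" using mzb by simp
              have t1: "touches (kcomp F c \<alpha> \<beta> ev0) u" using tu unfolding K_def .
              have t2: "touches (kcomp F c \<alpha> \<beta> ev0) v" using tv unfolding K_def .
              have t3: "touches (kcomp F c \<alpha> \<beta> ev0) z" using \<open>touches K z\<close> unfolding K_def .
              show False
                by (rule three_end[OF fin e2 pc ev0 uv uz(3) zv[symmetric] t1 t2 t3 m1 m2 m3])
            qed
            define K' where "K' = kcomp F c \<alpha> \<beta> ez0"
            have K'sub: "K' \<subseteq> abE F c \<alpha> \<beta>" unfolding K'_def by (rule kcomp_sub[OF ez0])
            have K'cl: "\<And>f g. f \<in> K' \<Longrightarrow> g \<in> abE F c \<alpha> \<beta> \<Longrightarrow> f \<inter> g \<noteq> {} \<Longrightarrow> g \<in> K'"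
              unfolding K'_def using kcomp_closed[OF ez0] by blast
            have tz': "touches K' z" unfolding touches_def K'_def using kcomp_self[of ez0] ez0_def by auto
            have nt': "\<not> touches K' x" if tx: "touches K x" for x
            proof
              assume "touches K' x"
              then obtain f2 where "f2 \<in> K'" "x \<in> f2" unfolding touches_def by auto
              moreover obtain f1 where "f1 \<in> K" "x \<in> f1" using tx unfolding touches_def by auto
              ultimately have "K = K'" unfolding K_def K'_def using touch_same[OF ev0 ez0] by blast
              thus False using ntz tz' by simp
            qed
            have tw: "touches K w"
            proof -
              obtain f1 where f1: "f1 \<in> K" "u \<in> f1" using tu unfolding touches_def by auto
              have "{u,w} \<in> abE F c \<alpha> \<beta>" using uw unfolding abE_def by auto
              hence "{u,w} \<in> K" using Kcl[OF f1(1)] f1 by auto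
              thus ?thesis unfolding touches_def by auto
            qed
            define c' where "c' = swapc \<alpha> \<beta> c K'"
            have pc': "proper_edge_colouring F 4 c'" unfolding c'_def
              by (rule kempe_proper[OF pc \<alpha>(1) \<beta>(1) K'sub K'cl])
            have nu': "\<not> touches K' u" using nt' tu by auto
            have m1: "miss F c' z \<alpha>" unfolding c'_def using swap_miss_in[OF K'sub K'cl tz' ab] mzb by auto
            have m2: "miss F c' u \<alpha>" unfolding c'_def using swap_miss_out[OF nu'] \<alpha> by auto
            have m3: "miss F c' v \<beta>" unfolding c'_def using swap_miss_out[OF nt'[OF tv]] \<beta> by auto
            have m4: "miss F c' w \<gamma>" unfolding c'_def using swap_miss_out[OF nt'[OF tw]] \<gamma> by auto
            have c1: "c' {u,w} = \<beta>" using nu' uw unfolding c'_def swapc_def touches_def by auto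
            have c2: "c' {u,z} = \<gamma>" using nu' uz unfolding c'_def swapc_def touches_def by auto
            show ?thesis
              using shift2[OF pc' uw(1) uw(3) c1 m3 uz(1) uz(3) c2 m4 m1 m2 \<alpha>(1)] uv vw zv zw by auto
          qed
        qed
      qed
    qed
  qed
qed

lemma vizing3:
  assumes "finite F" "edges2 F" "\<And>x. degree F x \<le> 3"
  shows "\<exists>c. proper_edge_colouring F 4 c"
  using assms
proof (induction F rule: finite_induct)
  case empty
  show ?case by (auto simp: proper_edge_colouring_def)
next
  case (insert e F)
  have e2: "edges2 F" using insert(4) unfolding edges2_def by auto
  have dF: "\<And>x. degree F x \<le> degree (insert e F) x" unfolding degree_def
    using insert(1) by (intro card_mono) auto
  have dF3: "\<And>x. degree F x \<le> 3" using dF insert(5) le_trans by blast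
  obtain c where pc: "proper_edge_colouring F 4 c" using insert(3)[OF e2 dF3] by blast
  obtain u v where e: "e = {u,v}" "u \<noteq> v" using insert(4) unfolding edges2_def by auto
  have "degree (insert e F) u = Suc (degree F u)" unfolding degree_def
  proof -
    have "{f\<in>insert e F. u \<in> f} = insert e {f\<in>F. u \<in> f}" using e by auto
    thus "card {f\<in>insert e F. u \<in> f} = Suc (card {f\<in>F. u \<in> f})" using insert(1,2) by simp
  qed
  hence du: "degree F u \<le> 2" using insert(5)[of u] by simp
  show ?case using viz_step[OF insert(1) e2 dF3 du _ e(2) pc] insert(2) e by auto
qed

definition conn :: "'v set \<Rightarrow> ('v \<times> 'v set) set" where
  "conn e = (\<lambda>a. (a,e)) ` e"

locale cub =
  fixes V :: "'v set" and E :: "'v set set"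
  assumes cg: "cubic_graph V E"
begin

lemma finV: "finite V" using cg unfolding cubic_graph_def simple_graph_def by auto

lemma edgeE: "e \<in> E \<Longrightarrow> \<exists>a b. e = {a,b} \<and> a \<noteq> b \<and> a \<in> V \<and> b \<in> V"
  using cg unfolding cubic_graph_def simple_graph_def by auto

lemma EsubV: "e \<in> E \<Longrightarrow> e \<subseteq> V" using edgeE by blast

lemma finE: "finite E"
proof -
  have "E \<subseteq> Pow V" using EsubV by auto
  thus ?thesis using finV finite_subset by blast
qed

lemma e2: "edges2 E" unfolding edges2_def using edgeE by blast

definition N :: "'v \<Rightarrow> 'v set set" where "N v = {e\<in>E. v \<in> e}"

lemma finN: "finite (N v)" unfolding N_def using finE by auto

lemma cardN: "v \<in> V \<Longrightarrow> card (N v) = 3"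
  using cg unfolding cubic_graph_def degree_def N_def by auto

lemma NV: "v \<notin> V \<Longrightarrow> N v = {}" unfolding N_def using EsubV by auto

lemma deg3: "degree E x \<le> 3"
  using cardN[of x] NV[of x] unfolding degree_def N_def[symmetric] by (cases "x \<in> V") auto

lemma third_ex:
  assumes "e \<in> E" "f \<in> E" "v \<in> e" "v \<in> f" "e \<noteq> f"
  shows "\<exists>g. N v - {e,f} = {g}"
proof -
  have vV: "v \<in> V" using assms EsubV by auto
  have "{e,f} \<subseteq> N v" using assms unfolding N_def by auto
  hence "card (N v - {e,f}) = 1" using cardN[OF vV] finN assms(5)
    by (simp add: card_Diff_subset)
  thus ?thesis by (simp add: card_1_singleton_iff)
qed

definition third :: "'v \<Rightarrow> 'v set set \<Rightarrow> 'v set" where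
  "third v S = (THE g. g \<in> E \<and> v \<in> g \<and> g \<notin> S)"

lemma third:
  assumes "e \<in> E" "f \<in> E" "v \<in> e" "v \<in> f" "e \<noteq> f"
  shows "N v - {e,f} = {third v {e,f}}"
proof -
  obtain g where g: "N v - {e,f} = {g}" using third_ex[OF assms] by blast
  have "third v {e,f} = g" unfolding third_def
  proof (rule the_equality)
    show "g \<in> E \<and> v \<in> g \<and> g \<notin> {e,f}" using g unfolding N_def by auto
    fix g' assume "g' \<in> E \<and> v \<in> g' \<and> g' \<notin> {e,f}"
    hence "g' \<in> N v - {e,f}" unfolding N_def by auto
    thus "g' = g" using g by auto
  qed
  thus ?thesis using g by simp
qed

lemma third_props:
  assumes "e \<in> E" "f \<in> E" "v \<in> e" "v \<in> f" "e \<noteq> f"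
  shows "third v {e,f} \<in> E" "v \<in> third v {e,f}" "third v {e,f} \<noteq> e" "third v {e,f} \<noteq> f"
    "N v = {e, f, third v {e,f}}"
proof -
  have t: "N v - {e,f} = {third v {e,f}}" by (rule third[OF assms])
  hence "third v {e,f} \<in> N v" by auto
  thus "third v {e,f} \<in> E" "v \<in> third v {e,f}" unfolding N_def by auto
  show "third v {e,f} \<noteq> e" "third v {e,f} \<noteq> f" using t by auto
  have "{e,f} \<subseteq> N v" using assms unfolding N_def by auto
  thus "N v = {e, f, third v {e,f}}" using t by auto
qed

lemma TE_cases:
  assumes "X \<in> tr_edges V E"
  shows "(\<exists>v e f. X = {(v,e),(v,f)} \<and> e \<in> E \<and> f \<in> E \<and> v \<in> e \<and> v \<in> f \<and> e \<noteq> f)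
       \<or> (\<exists>e\<in>E. X = conn e)"
proof -
  from assms consider (a) "\<exists>v e f. X = {(v,e),(v,f)} \<and> v \<in> V \<and> e \<in> E \<and> f \<in> E \<and> v \<in> e \<and> v \<in> f \<and> e \<noteq> f"
    | (b) "\<exists>u v e. X = {(u,e),(v,e)} \<and> e \<in> E \<and> e = {u,v} \<and> u \<noteq> v"
    unfolding tr_edges_def by blast
  thus ?thesis
  proof cases
    case a thus ?thesis by blast
  next
    case b
    then obtain u v e where "X = {(u,e),(v,e)}" "e \<in> E" "e = {u,v}" by blast
    hence "X = conn e" unfolding conn_def by auto
    thus ?thesis using \<open>e \<in> E\<close> by blast
  qed
qed

lemma TE_E:
  assumes "X \<in> tr_edges V E"
  obtains (t) v e f where "X = {(v,e),(v,f)}" "e \<in> E" "f \<in> E" "v \<in> e" "v \<in> f" "e \<noteq> f"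
    | (c) e where "e \<in> E" "X = conn e"
proof -
  from TE_cases[OF assms] show thesis
  proof (elim disjE exE conjE bexE)
    fix v e f assume "X = {(v,e),(v,f)}" "e \<in> E" "f \<in> E" "v \<in> e" "v \<in> f" "e \<noteq> f"
    thus thesis by (rule t)
  next
    fix e assume "e \<in> E" "X = conn e"
    thus thesis by (rule c)
  qed
qed

lemma tri_TE: "e \<in> E \<Longrightarrow> f \<in> E \<Longrightarrow> v \<in> e \<Longrightarrow> v \<in> f \<Longrightarrow> e \<noteq> f \<Longrightarrow> {(v,e),(v,f)} \<in> tr_edges V E"
proof -
  assume a: "e \<in> E" "f \<in> E" "v \<in> e" "v \<in> f" "e \<noteq> f"
  hence "v \<in> V" using EsubV by auto
  hence "\<exists>v' e' f'. {(v,e),(v,f)} = {(v',e'),(v',f')} \<and> v' \<in> V \<and> e' \<in> E \<and> f' \<in> E \<and> v' \<in> e' \<and> v' \<in> f' \<and> e' \<noteq> f'"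
    using a by (intro exI[of _ v] exI[of _ e] exI[of _ f]) simp
  thus ?thesis unfolding tr_edges_def by (intro UnI1) (simp only: mem_Collect_eq)
qed

lemma conn_TE: "e \<in> E \<Longrightarrow> conn e \<in> tr_edges V E"
proof -
  assume e: "e \<in> E"
  then obtain a b where ab: "e = {a,b}" "a \<noteq> b" using edgeE by blast
  hence "conn e = {(a,e),(b,e)}" unfolding conn_def by auto
  thus ?thesis unfolding tr_edges_def using e ab by blast
qed

lemma conn_inj: "conn e \<inter> conn f \<noteq> {} \<Longrightarrow> e = f"
  unfolding conn_def by auto

end

context cub begin

definition cT :: "('v set \<Rightarrow> nat) \<Rightarrow> ('v \<times> 'v set) set \<Rightarrow> nat" where
  "cT c X = (if card (snd ` X) = 1 then c (the_elem (snd ` X))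
             else c (third (the_elem (fst ` X)) (snd ` X)))"

lemma cT_tri:
  assumes "e \<noteq> f"
  shows "cT c {(v,e),(v,f)} = c (third v {e,f})"
  using assms unfolding cT_def by simp

lemma cT_conn:
  assumes "e \<in> E"
  shows "cT c (conn e) = c e"
proof -
  obtain a b where ab: "e = {a,b}" "a \<noteq> b" using edgeE[OF assms] by blast
  have "snd ` conn e = {e}" unfolding conn_def using ab by auto
  thus ?thesis unfolding cT_def by simp
qed

lemma proper_E:
  assumes "proper_edge_colouring E k c" "e \<in> E" "f \<in> E" "e \<noteq> f" "v \<in> e" "v \<in> f"
  shows "c e \<noteq> c f"
proof -
  have "e \<inter> f \<noteq> {}" using assms by auto
  thus ?thesis using assms(1-4) unfolding proper_edge_colouring_def by simp
qed

lemma col_T: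
  assumes pc: "proper_edge_colouring E k c"
  shows "proper_edge_colouring (tr_edges V E) k (cT c)"
  unfolding proper_edge_colouring_def
proof (intro conjI ballI impI)
  fix X assume "X \<in> tr_edges V E"
  thus "cT c X < k"
  proof (cases rule: TE_E)
    case (t v e f)
    have "third v {e,f} \<in> E" using third_props(1)[OF t(2-6)] .
    hence "c (third v {e,f}) < k" using pc unfolding proper_edge_colouring_def by blast
    thus ?thesis using cT_tri[OF t(6)] t(1) by simp
  next
    case (c e)
    hence "c e < k" using pc unfolding proper_edge_colouring_def by blast
    thus ?thesis using cT_conn[OF c(1)] c(2) by simp
  qed
next
  fix X Y assume XY: "X \<in> tr_edges V E" "Y \<in> tr_edges V E" "X \<noteq> Y \<and> X \<inter> Y \<noteq> {}"
  have tri_conn: "cT c {(v,e),(v,f)} \<noteq> cT c (conn g)"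
    if h: "e \<in> E" "f \<in> E" "v \<in> e" "v \<in> f" "e \<noteq> f" "g \<in> E" "{(v,e),(v,f)} \<inter> conn g \<noteq> {}"
    for v e f g
  proof -
    have "(g = e \<or> g = f) \<and> v \<in> g" using h(7) unfolding conn_def by auto
    moreover note tp = third_props[OF h(1-5)]
    ultimately have "c (third v {e,f}) \<noteq> c g"
      using proper_E[OF pc tp(1) h(6), of v] by auto
    thus ?thesis using cT_tri[OF h(5)] cT_conn[OF h(6)] by simp
  qed
  show "cT c X \<noteq> cT c Y"
  using XY(1) proof (cases rule: TE_E)
    case (t v e f)
    note X = this
    show ?thesis
    using XY(2) proof (cases rule: TE_E)
      case (t v' e' f')
      have vv: "v' = v" using XY(3) X(1) t(1) by auto
      note tp = third_props[OF X(2-6)]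
      note tp' = third_props[OF t(2-6)]
      have "third v {e,f} \<noteq> third v {e',f'}"
      proof
        assume eq: "third v {e,f} = third v {e',f'}"
        have "{e,f} = N v - {third v {e,f}}" using tp(3,4,5) by auto
        also have "\<dots> = {e',f'}" using eq tp'(3,4,5) vv by auto
        finally have "{e,f} = {e',f'}" .
        hence "X = Y" using X(1) t(1) vv by (auto simp: doubleton_eq_iff)
        thus False using XY(3) by simp
      qed
      hence "c (third v {e,f}) \<noteq> c (third v {e',f'})"
        using proper_E[OF pc tp(1) tp'(1)] tp(2) tp'(2) vv by auto
      thus ?thesis using cT_tri[OF X(6)] cT_tri[OF t(6)] X(1) t(1) vv by simp
    next
      case (c g)
      thus ?thesis using tri_conn[OF X(2-6) c(1)] X(1) XY(3) by simp
    qed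
  next
    case (c g)
    note X = this
    show ?thesis
    using XY(2) proof (cases rule: TE_E)
      case (t v e f)
      have "{(v,e),(v,f)} \<inter> conn g \<noteq> {}" using XY(3) X t by auto
      thus ?thesis using tri_conn[OF t(2-6) X(1)] X t by metis
    next
      case (c g')
      have "g = g'" using conn_inj[of g g'] XY(3) X c by blast
      thus ?thesis using XY(3) X c by simp
    qed
  qed
qed

lemma col_H:
  assumes pc: "proper_edge_colouring (tr_edges V E) k d" and k3: "k \<le> 3"
  shows "proper_edge_colouring E k (\<lambda>e. d (conn e))"
  unfolding proper_edge_colouring_def
proof (intro conjI ballI impI)
  fix e assume "e \<in> E" thus "d (conn e) < k" using conn_TE pc unfolding proper_edge_colouring_def by auto
next
  fix e f assume ef: "e \<in> E" "f \<in> E" "e \<noteq> f \<and> e \<inter> f \<noteq> {}"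
  then obtain v where v: "v \<in> e" "v \<in> f" by auto
  have nef: "e \<noteq> f" using ef by simp
  note tp = third_props[OF ef(1,2) v nef]
  define g where "g = third v {e,f}"
  have g: "g \<in> E" "v \<in> g" "g \<noteq> e" "g \<noteq> f" using tp unfolding g_def by auto
  define tef where "tef = {(v,e),(v,f)}"
  define teg where "teg = {(v,e),(v,g)}"
  define tfg where "tfg = {(v,f),(v,g)}"
  have inT: "tef \<in> tr_edges V E" "teg \<in> tr_edges V E" "tfg \<in> tr_edges V E"
    unfolding tef_def teg_def tfg_def using tri_TE ef g v nef by auto
  have P: "\<And>X Y. X \<in> tr_edges V E \<Longrightarrow> Y \<in> tr_edges V E \<Longrightarrow> X \<noteq> Y \<Longrightarrow> X \<inter> Y \<noteq> {} \<Longrightarrow> d X \<noteq> d Y"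
    using pc unfolding proper_edge_colouring_def by blast
  have K: "\<And>X. X \<in> tr_edges V E \<Longrightarrow> d X < k" using pc unfolding proper_edge_colouring_def by blast
  have other: "\<exists>u. u \<noteq> v \<and> (u,h) \<in> conn h" if hh: "h \<in> E" "v \<in> h" for h
  proof -
    obtain a b where "h = {a,b}" "a \<noteq> b" using edgeE[OF hh(1)] by blast
    thus ?thesis using hh(2) unfolding conn_def by auto
  qed
  obtain ue where ue: "ue \<noteq> v" "(ue,e) \<in> conn e" using other ef v by blast
  obtain uf where uf: "uf \<noteq> v" "(uf,f) \<in> conn f" using other ef v by blast
  have ve: "(v,e) \<in> conn e" "(v,f) \<in> conn f" using v unfolding conn_def by auto
  have d1: "d tef \<noteq> d teg" "d tef \<noteq> d tfg" "d teg \<noteq> d tfg"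
    using P inT g nef unfolding tef_def teg_def tfg_def by (auto simp: doubleton_eq_iff)
  have ce: "conn e \<in> tr_edges V E" "conn f \<in> tr_edges V E" using conn_TE ef by auto
  have d2: "d (conn e) \<noteq> d tef" "d (conn e) \<noteq> d teg"
  proof -
    have "conn e \<noteq> tef" "conn e \<noteq> teg" using ue unfolding tef_def teg_def by auto
    moreover have "conn e \<inter> tef \<noteq> {}" "conn e \<inter> teg \<noteq> {}" using ve unfolding tef_def teg_def by auto
    ultimately show "d (conn e) \<noteq> d tef" "d (conn e) \<noteq> d teg" using P ce inT by auto
  qed
  have d3: "d (conn f) \<noteq> d tef" "d (conn f) \<noteq> d tfg"
  proof -
    have "conn f \<noteq> tef" "conn f \<noteq> tfg" using uf unfolding tef_def tfg_def by auto
    moreover have "conn f \<inter> tef \<noteq> {}" "conn f \<inter> tfg \<noteq> {}" using ve unfolding tef_def tfg_def by auto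
    ultimately show "d (conn f) \<noteq> d tef" "d (conn f) \<noteq> d tfg" using P ce inT by auto
  qed
  show "d (conn e) \<noteq> d (conn f)"
  proof
    assume eq: "d (conn e) = d (conn f)"
    have "{d (conn e), d tef, d teg, d tfg} \<subseteq> {0..<k}" using K inT ce by auto
    moreover have "card {d (conn e), d tef, d teg, d tfg} = 4" using d1 d2 d3 eq by auto
    ultimately have "4 \<le> card {0..<k}" by (metis card_mono finite_atLeastLessThan)
    thus False using k3 by simp
  qed
qed

end

definition adj :: "'a set set \<Rightarrow> ('a \<times> 'a) set" where
  "adj E = {(x, y). {x, y} \<in> E}"

lemma reach_adj: "reach V E = {(u, v). u \<in> V \<and> v \<in> V \<and> (u, v) \<in> (adj E)\<^sup>*}"
  unfolding reach_def adj_def ..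

lemma adj_sym: "sym (adj E)" unfolding adj_def sym_def by (auto simp: insert_commute)

lemma equiv_reach: "equiv V (reach V E)"
proof (rule equivI)
  show "refl_on V (reach V E)" unfolding refl_on_def reach_adj by auto
  show "sym (reach V E)" unfolding reach_adj sym_def
    using sym_rtrancl[OF adj_sym, of E] by (auto dest: symD)
  show "trans (reach V E)" unfolding reach_adj trans_def by (auto intro: rtrancl_trans)
  show "reach V E \<subseteq> V \<times> V" unfolding reach_adj by auto
qed

lemma reach_cong: "(adj E)\<^sup>* = (adj E')\<^sup>* \<Longrightarrow> reach V E = reach V E'"
  unfolding reach_adj by simp

lemma bridge_iff:
  assumes sg: "simple_graph V E" and e: "e = {x,y}" "e \<in> E" "x \<noteq> y"
  shows "e \<in> bridges V E \<longleftrightarrow> (x,y) \<notin> (adj (E - {e}))\<^sup>*"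
proof
  assume b: "e \<in> bridges V E"
  show "(x,y) \<notin> (adj (E - {e}))\<^sup>*"
  proof
    assume xy: "(x,y) \<in> (adj (E - {e}))\<^sup>*"
    have yx: "(y,x) \<in> (adj (E - {e}))\<^sup>*" by (rule symD[OF sym_rtrancl[OF adj_sym] xy])
    have "adj E \<subseteq> (adj (E - {e}))\<^sup>*"
    proof
      fix p assume "p \<in> adj E"
      then obtain a b where p: "p = (a,b)" "{a,b} \<in> E" unfolding adj_def by auto
      show "p \<in> (adj (E - {e}))\<^sup>*"
      proof (cases "{a,b} = e")
        case True
        hence "(a = x \<and> b = y) \<or> (a = y \<and> b = x)" using e by (auto simp: doubleton_eq_iff)
        thus ?thesis using xy yx p by auto
      next
        case False
        hence "(a,b) \<in> adj (E - {e})" using p unfolding adj_def by auto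
        thus ?thesis using p by auto
      qed
    qed
    hence "(adj E)\<^sup>* \<subseteq> (adj (E - {e}))\<^sup>*" by (metis rtrancl_subset_rtrancl)
    moreover have "(adj (E - {e}))\<^sup>* \<subseteq> (adj E)\<^sup>*" by (rule rtrancl_mono) (auto simp: adj_def)
    ultimately have "reach V E = reach V (E - {e})" by (intro reach_cong) auto
    thus False using b unfolding bridges_def num_components_def by auto
  qed
next
  assume nxy: "(x,y) \<notin> (adj (E - {e}))\<^sup>*"
  define R where "R = reach V E"
  define R' where "R' = reach V (E - {e})"
  have finV: "finite V" using sg unfolding simple_graph_def by auto
  have xyV: "x \<in> V" "y \<in> V" using sg e unfolding simple_graph_def by (auto simp: doubleton_eq_iff)
  have eqR: "equiv V R" "equiv V R'" unfolding R_def R'_def by (rule equiv_reach)+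
  have sub: "R' \<subseteq> R" unfolding R_def R'_def reach_adj
    using rtrancl_mono[of "adj (E - {e})" "adj E"] by (auto simp: adj_def)
  define \<phi> where "\<phi> C = R `` C" for C
  have img: "\<phi> ` (V // R') = V // R"
  proof
    show "\<phi> ` (V // R') \<subseteq> V // R"
    proof
      fix D assume "D \<in> \<phi> ` (V // R')"
      then obtain z where z: "z \<in> V" "D = R `` (R' `` {z})" unfolding \<phi>_def quotient_def by auto
      have "R `` (R' `` {z}) = R `` {z}"
      proof
        show "R `` (R' `` {z}) \<subseteq> R `` {z}" using sub eqR(1) unfolding equiv_def trans_def by blast
        show "R `` {z} \<subseteq> R `` (R' `` {z})" using z(1) eqR(2) unfolding equiv_def refl_on_def by blast
      qed
      thus "D \<in> V // R" using z unfolding quotient_def by auto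
    qed
  next
    show "V // R \<subseteq> \<phi> ` (V // R')"
    proof
      fix D assume "D \<in> V // R"
      then obtain z where z: "z \<in> V" "D = R `` {z}" unfolding quotient_def by auto
      have "R `` (R' `` {z}) = R `` {z}"
      proof
        show "R `` (R' `` {z}) \<subseteq> R `` {z}" using sub eqR(1) unfolding equiv_def trans_def by blast
        show "R `` {z} \<subseteq> R `` (R' `` {z})" using z(1) eqR(2) unfolding equiv_def refl_on_def by blast
      qed
      moreover have "R' `` {z} \<in> V // R'" using z unfolding quotient_def by auto
      ultimately show "D \<in> \<phi> ` (V // R')" using z unfolding \<phi>_def by (metis image_eqI)
    qed
  qed
  have ninj: "\<not> inj_on \<phi> (V // R')"
  proof
    assume inj: "inj_on \<phi> (V // R')"
    have cx: "R' `` {x} \<in> V // R'" "R' `` {y} \<in> V // R'" using xyV unfolding quotient_def by auto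
    have xyR: "(x,y) \<in> R" unfolding R_def reach_adj using xyV e unfolding adj_def by auto
    have "\<phi> (R' `` {x}) = R `` {x}"
      using sub eqR xyV unfolding \<phi>_def equiv_def refl_on_def trans_def by blast
    moreover have "\<phi> (R' `` {y}) = R `` {y}"
      using sub eqR xyV unfolding \<phi>_def equiv_def refl_on_def trans_def by blast
    moreover have "R `` {x} = R `` {y}" using eqR(1) xyR by (meson equiv_class_eq)
    ultimately have "R' `` {x} = R' `` {y}" using inj cx unfolding inj_on_def by metis
    hence "(x,y) \<in> R'" using eqR(2) xyV by (metis eq_equiv_class_iff)
    thus False using nxy unfolding R'_def reach_adj by auto
  qed
  have finQ: "finite (V // R')" using finV eqR(2) by (simp add: finite_quotient equiv_def)
  have "card (\<phi> ` (V // R')) < card (V // R')"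
    using ninj finQ card_image_le[OF finQ, of \<phi>] inj_on_iff_eq_card[OF finQ, of \<phi>] by linarith
  hence "num_components V E < num_components V (E - {e})"
    unfolding num_components_def R_def[symmetric] R'_def[symmetric] img .
  thus "e \<in> bridges V E" unfolding bridges_def using e by auto
qed

context cub begin

lemma sgH: "simple_graph V E" using cg unfolding cubic_graph_def by auto

lemma finTV: "finite (tr_verts V E)"
proof -
  have "tr_verts V E \<subseteq> V \<times> E" unfolding tr_verts_def by auto
  thus ?thesis using finV finE finite_subset by blast
qed

lemma sgT: "simple_graph (tr_verts V E) (tr_edges V E)"
  unfolding simple_graph_def
proof (intro conjI ballI)
  show "finite (tr_verts V E)" by (rule finTV)
  fix X assume "X \<in> tr_edges V E"
  thus "\<exists>p q. X = {p, q} \<and> p \<noteq> q \<and> p \<in> tr_verts V E \<and> q \<in> tr_verts V E"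
  proof (cases rule: TE_E)
    case (t v e f)
    have "v \<in> V" using t EsubV by auto
    thus ?thesis using t unfolding tr_verts_def by auto
  next
    case (c e)
    obtain a b where ab: "e = {a,b}" "a \<noteq> b" "a \<in> V" "b \<in> V" using edgeE[OF c(1)] by blast
    hence "X = {(a,e),(b,e)}" using c unfolding conn_def by auto
    thus ?thesis using ab c unfolding tr_verts_def by auto
  qed
qed

lemma same_tri:
  assumes "f \<in> E" "g \<in> E" "a \<in> f" "a \<in> g" "e \<in> E"
  shows "((a,f),(a,g)) \<in> (adj (tr_edges V E - {conn e}))\<^sup>*"
proof (cases "f = g")
  case True thus ?thesis by simp
next
  case False
  have T: "{(a,f),(a,g)} \<in> tr_edges V E" using tri_TE assms False by blast
  obtain x y where xy: "e = {x,y}" "x \<noteq> y" using edgeE[OF assms(5)] by blast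
  have "conn e = {(x,e),(y,e)}" unfolding conn_def xy by auto
  hence "{(a,f),(a,g)} \<noteq> conn e" using xy by (auto simp: doubleton_eq_iff)
  hence "((a,f),(a,g)) \<in> adj (tr_edges V E - {conn e})" using T unfolding adj_def by auto
  thus ?thesis by auto
qed

lemma lift:
  assumes "(a,b) \<in> (adj (E - {e}))\<^sup>*" "e \<in> E"
  shows "\<And>f g. f \<in> E \<Longrightarrow> g \<in> E \<Longrightarrow> a \<in> f \<Longrightarrow> b \<in> g \<Longrightarrow> ((a,f),(b,g)) \<in> (adj (tr_edges V E - {conn e}))\<^sup>*"
  using assms(1)
proof (induction rule: rtrancl_induct)
  case base thus ?case using same_tri assms(2) by blast
next
  case (step c b)
  define h where "h = {c,b}"
  have h: "h \<in> E" "h \<noteq> e" using step(2) unfolding adj_def h_def by auto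
  have ch: "c \<in> h" "b \<in> h" unfolding h_def by auto
  have cb: "c \<noteq> b" using h edgeE unfolding h_def by force
  have "conn h = {(c,h),(b,h)}" unfolding conn_def h_def by auto
  moreover have "conn h \<noteq> conn e"
  proof
    assume "conn h = conn e"
    moreover have "(c,h) \<in> conn h" using ch unfolding conn_def by auto
    ultimately have "conn h \<inter> conn e \<noteq> {}" by auto
    thus False using conn_inj h(2) by blast
  qed
  ultimately have st: "((c,h),(b,h)) \<in> adj (tr_edges V E - {conn e})"
    using conn_TE[OF h(1)] unfolding adj_def by auto
  have 1: "((a,f),(c,h)) \<in> (adj (tr_edges V E - {conn e}))\<^sup>*" using step(3)[OF step(4) h(1) step(6) ch(1)] .
  have 2: "((b,h),(b,g)) \<in> (adj (tr_edges V E - {conn e}))\<^sup>*" using same_tri[OF h(1) step(5) ch(2) step(7) assms(2)] .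
  show ?case using 1 st 2 by (meson rtrancl_into_rtrancl rtrancl_trans)
qed

lemma proj:
  assumes "(p,q) \<in> (adj (tr_edges V E - {conn e}))\<^sup>*"
  shows "(fst p, fst q) \<in> (adj (E - {e}))\<^sup>*"
  using assms
proof (induction rule: rtrancl_induct)
  case base thus ?case by simp
next
  case (step q r)
  have qr: "{q,r} \<in> tr_edges V E" "{q,r} \<noteq> conn e" using step(2) unfolding adj_def by auto
  from qr(1) have "fst q = fst r \<or> (fst q, fst r) \<in> adj (E - {e})"
  proof (cases rule: TE_E)
    case (t v e1 f1)
    hence "fst q = v" "fst r = v" by (auto simp: doubleton_eq_iff)
    thus ?thesis by simp
  next
    case (c h)
    have "h \<noteq> e" using c qr(2) by auto
    obtain a b where ab: "h = {a,b}" "a \<noteq> b" using edgeE[OF c(1)] by blast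
    have "{q,r} = {(a,h),(b,h)}" using c(2) ab unfolding conn_def by auto
    hence "{fst q, fst r} = h" using ab by (auto simp: doubleton_eq_iff)
    thus ?thesis using c(1) \<open>h \<noteq> e\<close> unfolding adj_def by auto
  qed
  thus ?case using step(3) by (auto intro: rtrancl_into_rtrancl)
qed

lemma tri_not_bridge:
  assumes "e \<in> E" "f \<in> E" "v \<in> e" "v \<in> f" "e \<noteq> f"
  shows "{(v,e),(v,f)} \<notin> bridges (tr_verts V E) (tr_edges V E)"
proof -
  note tp = third_props[OF assms]
  define g where "g = third v {e,f}"
  define t where "t = {(v,e),(v,f)}"
  have tT: "t \<in> tr_edges V E" unfolding t_def using tri_TE assms by blast
  have 1: "{(v,e),(v,g)} \<in> tr_edges V E - {t}"
    using tri_TE[OF assms(1) tp(1) assms(3) tp(2)] tp(3,4) unfolding g_def t_def by (auto simp: doubleton_eq_iff)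
  have 2: "{(v,g),(v,f)} \<in> tr_edges V E - {t}"
    using tri_TE[OF tp(1) assms(2) tp(2) assms(4)] tp(3,4) unfolding g_def t_def by (auto simp: doubleton_eq_iff)
  have "((v,e),(v,g)) \<in> adj (tr_edges V E - {t})" "((v,g),(v,f)) \<in> adj (tr_edges V E - {t})"
    using 1 2 unfolding adj_def by auto
  hence "((v,e),(v,f)) \<in> (adj (tr_edges V E - {t}))\<^sup>*" by (meson r_into_rtrancl rtrancl_into_rtrancl)
  thus ?thesis using bridge_iff[OF sgT t_def tT] assms(5) unfolding t_def by auto
qed

lemma conn_bridge:
  assumes "e \<in> E"
  shows "conn e \<in> bridges (tr_verts V E) (tr_edges V E) \<longleftrightarrow> e \<in> bridges V E"
proof -
  obtain x y where xy: "e = {x,y}" "x \<noteq> y" using edgeE[OF assms] by blast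
  have ce: "conn e = {(x,e),(y,e)}" unfolding conn_def xy by auto
  have "conn e \<in> bridges (tr_verts V E) (tr_edges V E) \<longleftrightarrow> ((x,e),(y,e)) \<notin> (adj (tr_edges V E - {conn e}))\<^sup>*"
    using bridge_iff[OF sgT ce conn_TE[OF assms]] xy by auto
  also have "\<dots> \<longleftrightarrow> (x,y) \<notin> (adj (E - {e}))\<^sup>*"
  proof
    assume "((x,e),(y,e)) \<notin> (adj (tr_edges V E - {conn e}))\<^sup>*"
    thus "(x,y) \<notin> (adj (E - {e}))\<^sup>*" using lift[of x y e e e] assms xy by auto
  next
    assume "(x,y) \<notin> (adj (E - {e}))\<^sup>*"
    thus "((x,e),(y,e)) \<notin> (adj (tr_edges V E - {conn e}))\<^sup>*" using proj[of "(x,e)" "(y,e)" e] by auto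
  qed
  also have "\<dots> \<longleftrightarrow> e \<in> bridges V E" using bridge_iff[OF sgH xy(1) assms xy(2)] by simp
  finally show ?thesis .
qed

lemma bridges_T: "bridges (tr_verts V E) (tr_edges V E) = conn ` bridges V E"
proof
  show "bridges (tr_verts V E) (tr_edges V E) \<subseteq> conn ` bridges V E"
  proof
    fix X assume X: "X \<in> bridges (tr_verts V E) (tr_edges V E)"
    hence "X \<in> tr_edges V E" unfolding bridges_def by auto
    thus "X \<in> conn ` bridges V E"
    proof (cases rule: TE_E)
      case (t v e f) thus ?thesis using tri_not_bridge X by auto
    next
      case (c e) thus ?thesis using conn_bridge X by auto
    qed
  qed
next
  show "conn ` bridges V E \<subseteq> bridges (tr_verts V E) (tr_edges V E)"
    using conn_bridge unfolding bridges_def by auto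
qed

lemma card_bridges: "card (bridges (tr_verts V E) (tr_edges V E)) = card (bridges V E)"
proof -
  have "inj_on conn (bridges V E)"
  proof (rule inj_onI)
    fix e f assume ef: "e \<in> bridges V E" "f \<in> bridges V E" "conn e = conn f"
    hence "e \<in> E" unfolding bridges_def by auto
    then obtain x y where "e = {x,y}" using edgeE by blast
    hence "conn e \<noteq> {}" unfolding conn_def by auto
    thus "e = f" using conn_inj ef(3) by auto
  qed
  thus ?thesis unfolding bridges_T by (rule card_image)
qed

end

context cub begin

lemma card_TV: "card (tr_verts V E) = 3 * card V"
proof -
  have "tr_verts V E = (SIGMA v:V. N v)" unfolding tr_verts_def N_def by auto
  hence "card (tr_verts V E) = (\<Sum>v\<in>V. card (N v))" using finV finN by (simp add: card_SigmaI)
  also have "\<dots> = (\<Sum>v\<in>V. 3)" using cardN by (intro sum.cong) auto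
  finally show ?thesis by simp
qed

lemma conv_hits:
  assumes S: "is_2conv_set (tr_verts V E) (tr_edges V E) S" and v: "v \<in> V"
  shows "\<exists>e. (v,e) \<in> S"
proof (rule ccontr)
  assume nS: "\<not> ?thesis"
  let ?st = "conv_step (tr_verts V E) (tr_edges V E)"
  have inv: "\<forall>e. (v,e) \<notin> (?st ^^ t) S" for t
  proof (induction t)
    case 0 thus ?case using nS by simp
  next
    case (Suc t)
    show ?case
    proof (intro allI notI)
      fix e assume "(v,e) \<in> (?st ^^ Suc t) S"
      hence "(v,e) \<in> ?st ((?st ^^ t) S)" by simp
      hence "(v,e) \<in> (?st ^^ t) S \<union> {x \<in> tr_verts V E. 2 \<le> card {u \<in> (?st ^^ t) S. {u, x} \<in> tr_edges V E}}"
        unfolding conv_step_def .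
      moreover have "(v,e) \<notin> (?st ^^ t) S" using Suc.IH by simp
      ultimately have A: "(v,e) \<in> tr_verts V E" "card {p \<in> (?st ^^ t) S. {p,(v,e)} \<in> tr_edges V E} \<ge> 2"
        by simp_all
      have eE: "e \<in> E" "v \<in> e" using A(1) unfolding tr_verts_def by auto
      obtain a b where ab: "e = {a,b}" "a \<noteq> b" using edgeE[OF eE(1)] by blast
      have sub: "{p \<in> (?st ^^ t) S. {p,(v,e)} \<in> tr_edges V E} \<subseteq> (\<lambda>x. (x,e)) ` (e - {v})"
      proof
        fix p assume p: "p \<in> {p \<in> (?st ^^ t) S. {p,(v,e)} \<in> tr_edges V E}"
        hence pS: "p \<in> (?st ^^ t) S" and pT: "{p,(v,e)} \<in> tr_edges V E" by auto
        have fp: "fst p \<noteq> v"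
        proof
          assume "fst p = v"
          hence "p = (v, snd p)" by (metis prod.collapse)
          thus False using pS Suc.IH by metis
        qed
        from pT show "p \<in> (\<lambda>x. (x,e)) ` (e - {v})"
        proof (cases rule: TE_E)
          case (t w e1 f1)
          have m1: "p \<in> {p,(v,e)}" "(v,e) \<in> {p,(v,e)}" by simp_all
          have "p \<in> {(w,e1),(w,f1)}" "(v,e) \<in> {(w,e1),(w,f1)}" using m1 unfolding t(1) .
          hence "fst p = w" "v = w" by auto
          thus ?thesis using fp by simp
        next
          case (c h)
          have m1: "p \<in> {p,(v,e)}" "(v,e) \<in> {p,(v,e)}" by simp_all
          hence "p \<in> conn h" "(v,e) \<in> conn h" unfolding c(2) .
          note pc = this
          have "(v,e) \<in> conn e" using eE(2) unfolding conn_def by simp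
          hence "conn h \<inter> conn e \<noteq> {}" using pc(2) by blast
          hence he: "h = e" by (rule conn_inj)
          then obtain a where a: "a \<in> e" "p = (a,e)" using pc(1) unfolding conn_def by blast
          hence "a \<noteq> v" using fp by simp
          thus ?thesis using a by blast
        qed
      qed
      have "card (e - {v}) = 1" using ab eE by auto
      moreover have fin: "finite (e - {v})" using ab by auto
      ultimately have "card ((\<lambda>x. (x,e)) ` (e - {v})) \<le> 1" using card_image_le[OF fin, of "\<lambda>x. (x,e)"] by linarith
      moreover have "card {p \<in> (?st ^^ t) S. {p,(v,e)} \<in> tr_edges V E} \<le> card ((\<lambda>x. (x,e)) ` (e - {v}))"
        by (rule card_mono[OF finite_imageI[OF fin] sub])
      ultimately have "card {p \<in> (?st ^^ t) S. {p,(v,e)} \<in> tr_edges V E} \<le> 1" by linarith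
      thus False using A(2) by simp
    qed
  qed
  obtain t where t: "(?st ^^ t) S = tr_verts V E" using S unfolding is_2conv_set_def by auto
  have "N v \<noteq> {}" using cardN[OF v] by auto
  then obtain e where "e \<in> E" "v \<in> e" unfolding N_def by auto
  hence "(v,e) \<in> tr_verts V E" using v unfolding tr_verts_def by auto
  thus False using inv[of t] t by auto
qed

lemma conv_card:
  assumes S: "is_2conv_set (tr_verts V E) (tr_edges V E) S"
  shows "card V \<le> card S"
proof -
  define f where "f v = (v, SOME e. (v,e) \<in> S)" for v
  have fS: "f ` V \<subseteq> S" unfolding f_def using conv_hits[OF S] by (auto intro: someI_ex)
  have "inj_on f V" unfolding f_def inj_on_def by auto
  hence "card V = card (f ` V)" by (simp add: card_image)
  also have "\<dots> \<le> card S"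
  proof (rule card_mono[OF _ fS])
    show "finite S" using S finTV unfolding is_2conv_set_def by (auto intro: finite_subset)
  qed
  finally show ?thesis .
qed

lemma c2_ge: "card V \<le> c2 (tr_verts V E) (tr_edges V E)"
proof -
  have ex: "\<exists>S. is_2conv_set (tr_verts V E) (tr_edges V E) S \<and> card S = card (tr_verts V E)"
    unfolding is_2conv_set_def by (intro exI[of _ "tr_verts V E"]) (auto intro: exI[of _ 0])
  have "\<exists>S. is_2conv_set (tr_verts V E) (tr_edges V E) S \<and> card S = c2 (tr_verts V E) (tr_edges V E)"
    unfolding c2_def by (rule LeastI_ex) (use ex in blast)
  thus ?thesis using conv_card by metis
qed

lemma chi_eq: "chromatic_index (tr_edges V E) = chromatic_index E"
proof -
  obtain c4 where c4: "proper_edge_colouring E 4 c4" using vizing3[OF finE e2 deg3] by blast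
  have exH: "\<exists>c. proper_edge_colouring E (chromatic_index E) c"
    unfolding chromatic_index_def by (rule LeastI_ex) (use c4 in blast)
  have le4: "chromatic_index E \<le> 4" unfolding chromatic_index_def by (rule Least_le) (use c4 in blast)
  have exT: "\<exists>c. proper_edge_colouring (tr_edges V E) (chromatic_index (tr_edges V E)) c"
    unfolding chromatic_index_def by (rule LeastI_ex) (use col_T[OF c4] in blast)
  obtain c where c: "proper_edge_colouring E (chromatic_index E) c" using exH by blast
  have 1: "chromatic_index (tr_edges V E) \<le> chromatic_index E"
    unfolding chromatic_index_def[of "tr_edges V E"] by (rule Least_le) (use col_T[OF c] in blast)
  obtain d where d: "proper_edge_colouring (tr_edges V E) (chromatic_index (tr_edges V E)) d" using exT by blast
  have 2: "chromatic_index E \<le> chromatic_index (tr_edges V E)"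
  proof (cases "chromatic_index (tr_edges V E) \<le> 3")
    case True
    show ?thesis unfolding chromatic_index_def[of E] by (rule Least_le) (use col_H[OF d True] in blast)
  next
    case False thus ?thesis using le4 by simp
  qed
  show ?thesis using 1 2 by simp
qed

end

lemma arith_part:
  fixes c m :: nat
  assumes "m \<le> c"
  shows "int c - \<lceil>(real (3 * m) + 2) / 4\<rceil> \<ge> \<lfloor>(real m - 2) / 4\<rfloor>"
proof -
  define a where "a = \<lfloor>(real m - 2) / 4\<rfloor>"
  have "real_of_int a \<le> (real m - 2) / 4" unfolding a_def by (rule of_int_floor_le)
  hence "(real (3 * m) + 2) / 4 \<le> real_of_int (int m - a)" by simp
  hence "\<lceil>(real (3 * m) + 2) / 4\<rceil> \<le> int m - a" by (simp add: ceiling_le_iff)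
  thus ?thesis using assms unfolding a_def by linarith
qed

theorem proposition5p11:
  fixes V :: "'v set" and E :: "'v set set" and m :: nat
  assumes "cubic_graph V E" and "card V = m"
  shows "int (c2 (tr_verts V E) (tr_edges V E))
           - \<lceil>(real (card (tr_verts V E)) + 2) / 4\<rceil> \<ge> \<lfloor>(real m - 2) / 4\<rfloor>
         \<and> card (bridges (tr_verts V E) (tr_edges V E)) = card (bridges V E)
         \<and> chromatic_index (tr_edges V E) = chromatic_index E"
proof -
  interpret cub V E by standard (rule assms(1))
  have "int (c2 (tr_verts V E) (tr_edges V E))
           - \<lceil>(real (card (tr_verts V E)) + 2) / 4\<rceil> \<ge> \<lfloor>(real m - 2) / 4\<rfloor>"
    using arith_part[OF c2_ge] card_TV assms(2) by simp
  thus ?thesis using card_bridges chi_eq by simp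
qed

end
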